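(* For every sufficiently large $n$, there exists an instance of the MaxMinDegree Arborescence problem on a layered directed graph $G$ of depth $3$ with $\Theta(n)$ vertices, such that $k_u=n^{\Omega(1)}$ for every non-sink vertex $u$, and such that the integrality gap of $1$ round (level $1$) of the Sherali-Adams hierarchy applied to the assignment LP is at least $n^{\Omega(1)}$.
   Context: MaxMinDegree Arborescence (MMDA) on layered graphs: a layered directed graph $G=(V,E)$ of depth $\ell$ has vertex set $V=L_0\dot\cup L_1\dot\cup\cdots\dot\cup L_\ell$, every edge goes from some $L_i$ to $L_{i+1}$, $L_0=\{s\}$ where $s$ is the source, and the vertices of $L_\ell$ are the sinks. Every non-sink vertex $u$ has a required out-degree $k_u>0$. For $\alpha\ge 1$, an $\alpha$-approximate integral solution is an edge set $T\subseteq E$ such that $|\delta^+_T(s)|\ge k_s/\alpha$, every vertex has in-degree at most $1$ in $T$, and every non-sink vertex $v\ne s$ with in-degree $1$ in $T$ satisfies $|\delta^+_T(v)|\ge k_v/\alpha$. The size $n$ of the instance is its number of vertices. The assignment LP has a variable $x_e$ for each $e\in E$ and constraints $x(\delta^+(s))\ge k_s$; $x(\delta^+(v))\ge k_v\, x(\delta^-(v))$ for every $v\notin\{s\}\cup L_\ell$; $x(\delta^-(v))\le 1$ for all $v$; $0\le x_e\le 1$. The level-$r$ Sherali-Adams relaxation of an LP $\{x\in[0,1]^N: a^Tx\le b \text{ for each constraint}\}$ has variables $y_I$ for $I\subseteq[N]$, $|I|\le r+1$, with $y_\emptyset=1$, and for every constraint $a^Tx\le b$ of the LP (including the bounds $0\le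 x_i\le 1$) and all disjoint $V_0,V_1\subseteq[N]$ with $|V_0|+|V_1|\le r$ it requires $\sum_{W\subseteq V_0}(-1)^{|W|}\big(b\,y_{V_1\cup W}-\sum_i a_i\, y_{V_1\cup W\cup\{i\}}\big)\ge 0$ (the linearization of $\prod_{i\in V_1}x_i\prod_{i\in V_0}(1-x_i)(b-a^Tx)\ge 0$ using $x_i^2=x_i$); the projected solution is $x_i=y_{\{i\}}$. Integrality gap of a relaxation $R$ on an instance: $\alpha_{\mathrm{int}}/\alpha_R$, where $\alpha_{\mathrm{int}}$ is the smallest $\alpha$ for which an $\alpha$-approximate integral solution exists and $\alpha_R$ is the smallest $\alpha$ for which $R$ is feasible when every $k_u$ is replaced by $k_u/\alpha$. *)

theory Defs
  imports Complex_Main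
begin

type_synonym vtx = nat
type_synonym edge = "nat \<times> nat"

definition out_edges :: "edge set \<Rightarrow> vtx \<Rightarrow> edge set" where
  "out_edges E v = {e \<in> E. fst e = v}"

definition in_edges :: "edge set \<Rightarrow> vtx \<Rightarrow> edge set" where
  "in_edges E v = {e \<in> E. snd e = v}"

definition layered_graph ::
  "vtx set \<Rightarrow> edge set \<Rightarrow> vtx \<Rightarrow> nat \<Rightarrow> (nat \<Rightarrow> vtx set) \<Rightarrow> bool" where
  "layered_graph V E s l L \<longleftrightarrow>
     finite V \<and>
     V = (\<Union>i\<in>{0..l}. L i) \<and>
     (\<forall>i\<in>{0..l}. \<forall>j\<in>{0..l}. i \<noteq> j \<longrightarrow> L i \<inter> L j = {}) \<and>
     L 0 = {s} \<and>
     E \<subseteq> (\<Union>i\<in>{0..<l}. L i \<times> L (Suc i))"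

definition mmda_instance ::
  "vtx set \<Rightarrow> edge set \<Rightarrow> vtx \<Rightarrow> nat \<Rightarrow> (nat \<Rightarrow> vtx set) \<Rightarrow> (vtx \<Rightarrow> nat) \<Rightarrow> bool" where
  "mmda_instance V E s l L k \<longleftrightarrow>
     layered_graph V E s l L \<and> (\<forall>u \<in> V - L l. k u > 0)"

definition integral_approx ::
  "vtx set \<Rightarrow> edge set \<Rightarrow> vtx \<Rightarrow> nat \<Rightarrow> (nat \<Rightarrow> vtx set) \<Rightarrow> (vtx \<Rightarrow> nat) \<Rightarrow> real \<Rightarrow> bool" where
  "integral_approx V E s l L k \<alpha> \<longleftrightarrow>
     (\<exists>T. T \<subseteq> E \<and>
        real (card (out_edges T s)) \<ge> real (k s) / \<alpha> \<and>
        (\<forall>v\<in>V. card (in_edges T v) \<le> 1) \<and>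
        (\<forall>v\<in>V - L l - {s}. card (in_edges T v) = 1 \<longrightarrow>
            real (card (out_edges T v)) \<ge> real (k v) / \<alpha>))"

text \<open>A linear constraint a^T x \<le> b is a pair (a, b).\<close>
type_synonym 'e lin_constr = "('e \<Rightarrow> real) \<times> real"

definition with_bounds :: "'e set \<Rightarrow> 'e lin_constr set \<Rightarrow> 'e lin_constr set" where
  "with_bounds N C = C \<union> {((\<lambda>j. if j = i then -1 else 0), 0) | i. i \<in> N}
                       \<union> {((\<lambda>j. if j = i then 1 else 0), 1) | i. i \<in> N}"

text \<open>Level-r Sherali-Adams relaxation of {x \<in> [0,1]^N : constraints C}; y I for |I| \<le> r+1.\<close>
definition SA_feasible :: "'e set \<Rightarrow> 'e lin_constr set \<Rightarrow> nat \<Rightarrow> ('e set \<Rightarrow> real) \<Rightarrow> bool" where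
  "SA_feasible N C r y \<longleftrightarrow>
     y {} = 1 \<and>
     (\<forall>(a, b) \<in> with_bounds N C. \<forall>V0 V1.
        V0 \<subseteq> N \<and> V1 \<subseteq> N \<and> V0 \<inter> V1 = {} \<and> card V0 + card V1 \<le> r \<longrightarrow>
        (\<Sum>W\<in>Pow V0. (-1) ^ card W *
            (b * y (V1 \<union> W) - (\<Sum>i\<in>N. a i * y (V1 \<union> W \<union> {i})))) \<ge> 0)"

definition assignment_LP ::
  "vtx set \<Rightarrow> edge set \<Rightarrow> vtx \<Rightarrow> nat \<Rightarrow> (nat \<Rightarrow> vtx set) \<Rightarrow> (vtx \<Rightarrow> real) \<Rightarrow> edge lin_constr set" where
  "assignment_LP V E s l L k' =
     {((\<lambda>e. if e \<in> out_edges E s then -1 else 0), - k' s)}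
     \<union> {((\<lambda>e. (if e \<in> in_edges E v then k' v else 0) - (if e \<in> out_edges E v then 1 else 0)), 0)
          | v. v \<in> V - ({s} \<union> L l)}
     \<union> {((\<lambda>e. if e \<in> in_edges E v then 1 else 0), 1) | v. v \<in> V}"

definition SA_assign_feasible ::
  "nat \<Rightarrow> vtx set \<Rightarrow> edge set \<Rightarrow> vtx \<Rightarrow> nat \<Rightarrow> (nat \<Rightarrow> vtx set) \<Rightarrow> (vtx \<Rightarrow> nat) \<Rightarrow> real \<Rightarrow> bool" where
  "SA_assign_feasible r V E s l L k \<beta> \<longleftrightarrow>
     (\<exists>y. SA_feasible E (assignment_LP V E s l L (\<lambda>u. real (k u) / \<beta>)) r y)"

end

theory Submission
  imports Defs "HOL-Library.Countable"
begin


lemma card_le1_cases: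
  assumes "finite V0" "finite V1" "V0 \<inter> V1 = {}" "card V0 + card V1 \<le> 1"
  shows "(V0 = {} \<and> V1 = {}) \<or> (V0 = {} \<and> (\<exists>j. V1 = {j})) \<or> ((\<exists>j. V0 = {j}) \<and> V1 = {})"
proof -
  have "card V0 = 0 \<and> card V1 = 0 \<or> card V0 = 0 \<and> card V1 = 1 \<or> card V0 = 1 \<and> card V1 = 0"
    using assms(4) by linarith
  then show ?thesis using assms(1,2) by (auto simp: card_1_singleton_iff)
qed

lemma prod_pair:
  "(\<Prod>k\<in>{i, j}. (f k::real)) = f j * f i + (if i = j then f j - f j * f j else 0)"
  by (cases "i = j") (auto simp: insert_commute)

lemma sum_pair_lin:
  fixes x :: "'w \<Rightarrow> 'e \<Rightarrow> real"
  assumes "finite N" "j \<in> N"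
  shows "(\<Sum>i\<in>N. a i * (\<Sum>w\<in>\<Omega>. p w * (\<Prod>k\<in>{j} \<union> {i}. x w k)))
       = (\<Sum>w\<in>\<Omega>. p w * (x w j * ((\<Sum>i\<in>N. a i * x w i) + a j * (1 - x w j))))"
proof -
  have "(\<Sum>i\<in>N. a i * (\<Sum>w\<in>\<Omega>. p w * (\<Prod>k\<in>{j} \<union> {i}. x w k)))
      = (\<Sum>i\<in>N. \<Sum>w\<in>\<Omega>. p w * (a i * (x w j * x w i)) + (if i = j then p w * (a j * (x w j - x w j * x w j)) else 0))"
    by (intro sum.cong refl, rename_tac i, case_tac "i = j") (simp_all add: prod_pair sum_distrib_left algebra_simps sum.distrib)
  also have "\<dots> = (\<Sum>w\<in>\<Omega>. \<Sum>i\<in>N. p w * (a i * (x w j * x w i)) + (if i = j then p w * (a j * (x w j - x w j * x w j)) else 0))"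
    by (rule sum.swap)
  also have "\<dots> = (\<Sum>w\<in>\<Omega>. p w * (x w j * (\<Sum>i\<in>N. a i * x w i)) + p w * (a j * (x w j - x w j * x w j)))"
    using assms by (intro sum.cong refl) (simp add: sum.distrib sum_distrib_left mult.assoc mult.left_commute)
  finally show ?thesis by (simp add: algebra_simps)
qed

lemma sum_single_lin:
  fixes x :: "'w \<Rightarrow> 'e \<Rightarrow> real"
  shows "(\<Sum>i\<in>N. a i * (\<Sum>w\<in>\<Omega>. p w * (\<Prod>k\<in>{} \<union> {i}. x w k)))
       = (\<Sum>w\<in>\<Omega>. p w * (\<Sum>i\<in>N. a i * x w i))"
  by (simp add: sum_distrib_left algebra_simps sum.swap[of _ N])

lemma SA1_from_conds:
  fixes N :: "'e set" and \<Omega> :: "'w set" and p :: "'w \<Rightarrow> real" and x :: "'w \<Rightarrow> 'e \<Rightarrow> real"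
  assumes fin: "finite N" and sp: "(\<Sum>w\<in>\<Omega>. p w) = 1"
    and c0: "\<And>a b. (a, b) \<in> with_bounds N C \<Longrightarrow> (\<Sum>w\<in>\<Omega>. p w * (b - (\<Sum>i\<in>N. a i * x w i))) \<ge> 0"
    and c1: "\<And>a b j. (a, b) \<in> with_bounds N C \<Longrightarrow> j \<in> N \<Longrightarrow>
       (\<Sum>w\<in>\<Omega>. p w * (x w j * ((b - (\<Sum>i\<in>N. a i * x w i)) - a j * (1 - x w j)))) \<ge> 0"
    and c2: "\<And>a b j. (a, b) \<in> with_bounds N C \<Longrightarrow> j \<in> N \<Longrightarrow>
       (\<Sum>w\<in>\<Omega>. p w * ((1 - x w j) * ((b - (\<Sum>i\<in>N. a i * x w i)) + a j * x w j))) \<ge> 0"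
  shows "SA_feasible N C 1 (\<lambda>S. \<Sum>w\<in>\<Omega>. p w * (\<Prod>i\<in>S. x w i))"
  unfolding SA_feasible_def
proof (intro conjI ballI, goal_cases)
  case 1 show ?case using sp by simp
next
  case (2 ab)
  note ab = 2(1)
  obtain a b where abd: "ab = (a, b)" by (cases ab)
  show ?case unfolding abd prod.case
  proof (intro allI impI)
  fix V0 V1 assume H: "V0 \<subseteq> N \<and> V1 \<subseteq> N \<and> V0 \<inter> V1 = {} \<and> card V0 + card V1 \<le> 1"
  have ab': "(a, b) \<in> with_bounds N C" using ab abd by simp
  define y where "y = (\<lambda>S. \<Sum>w\<in>\<Omega>. p w * (\<Prod>i\<in>S. x w i))"
  have fV: "finite V0" "finite V1" using H fin finite_subset by auto
  have y0: "y {} = 1" using sp by (simp add: y_def)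
  have pb: "(\<Sum>w\<in>\<Omega>. p w * b) = b" using sp by (simp add: sum_distrib_right[symmetric])
  have L0: "b * y ({} \<union> {}) - (\<Sum>i\<in>N. a i * y ({} \<union> {} \<union> {i}))
      = (\<Sum>w\<in>\<Omega>. p w * (b - (\<Sum>i\<in>N. a i * x w i)))"
    using sp sum_single_lin[of a p x \<Omega> N] pb
    by (simp add: y_def sum_distrib_left right_diff_distrib sum_subtractf)
  have L1: "b * y ({j} \<union> {}) - (\<Sum>i\<in>N. a i * y ({j} \<union> {} \<union> {i}))
      = (\<Sum>w\<in>\<Omega>. p w * (x w j * ((b - (\<Sum>i\<in>N. a i * x w i)) - a j * (1 - x w j))))" if "j \<in> N" for j
  proof -
    have A: "(\<Sum>i\<in>N. a i * y ({j} \<union> {} \<union> {i})) = (\<Sum>w\<in>\<Omega>. p w * (x w j * ((\<Sum>i\<in>N. a i * x w i) + a j * (1 - x w j))))"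
      unfolding y_def Un_empty_right by (rule sum_pair_lin[OF fin that])
    have B: "b * y ({j} \<union> {}) = (\<Sum>w\<in>\<Omega>. p w * (x w j * b))"
      unfolding y_def by (simp add: sum_distrib_left algebra_simps)
    show ?thesis unfolding A B sum_subtractf[symmetric] by (intro sum.cong refl) (simp add: algebra_simps)
  qed
  have main: "(\<Sum>W\<in>Pow V0. (-1) ^ card W * (b * y (V1 \<union> W) - (\<Sum>i\<in>N. a i * y (V1 \<union> W \<union> {i})))) \<ge> 0"
  proof -
    from card_le1_cases[OF fV] H
    consider "V0 = {}" "V1 = {}" | j where "V0 = {}" "V1 = {j}" | j where "V0 = {j}" "V1 = {}" by blast
    then show ?thesis
    proof cases
      case 1 then show ?thesis using L0 c0[OF ab'] by simp
    next
      case (2 j) then have "j \<in> N" using H by auto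
      then show ?thesis using 2 L1 c1[OF ab'] by simp
    next
      case (3 j) then have j: "j \<in> N" using H by auto
      have P: "Pow {j} = {{}, {j}}" by auto
      have "(\<Sum>W\<in>Pow V0. (-1) ^ card W * (b * y (V1 \<union> W) - (\<Sum>i\<in>N. a i * y (V1 \<union> W \<union> {i}))))
         = (b * y ({} \<union> {}) - (\<Sum>i\<in>N. a i * y ({} \<union> {} \<union> {i})))
           - (b * y ({j} \<union> {}) - (\<Sum>i\<in>N. a i * y ({j} \<union> {} \<union> {i})))"
        using 3 P by simp
      also have "\<dots> = (\<Sum>w\<in>\<Omega>. p w * ((1 - x w j) * ((b - (\<Sum>i\<in>N. a i * x w i)) + a j * x w j)))"
        unfolding L0 L1[OF j] by (simp add: sum_subtractf[symmetric] algebra_simps)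
      finally show ?thesis using c2[OF ab' j] by simp
    qed
  qed
  then show "0 \<le> (\<Sum>W\<in>Pow V0. (-1) ^ card W * (b * (\<Sum>w\<in>\<Omega>. p w * (\<Prod>i\<in>V1 \<union> W. x w i)) -
      (\<Sum>i\<in>N. a i * (\<Sum>w\<in>\<Omega>. p w * (\<Prod>i\<in>V1 \<union> W \<union> {i}. x w i)))))"
    by (simp add: y_def)
  qed
qed

lemma sum_indicator_lin:
  fixes x :: "'e \<Rightarrow> real"
  assumes "finite N" "i \<in> N"
  shows "(\<Sum>k\<in>N. (if k = i then c else 0) * x k) = c * x i"
proof -
  have "(\<Sum>k\<in>N. (if k = i then c else 0) * x k) = (\<Sum>k\<in>N. if k = i then c * x k else 0)"
    by (intro sum.cong) auto
  also have "\<dots> = c * x i" using assms by (simp add: sum.delta)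
  finally show ?thesis .
qed

lemma SA1_mixture:
  fixes N :: "'e set" and \<Omega> :: "'w set" and p :: "'w \<Rightarrow> real" and x :: "'w \<Rightarrow> 'e \<Rightarrow> real"
  assumes fin: "finite N" and sp: "(\<Sum>w\<in>\<Omega>. p w) = 1"
    and pnn: "\<And>w. w \<in> \<Omega> \<Longrightarrow> p w \<ge> 0"
    and x01: "\<And>w i. w \<in> \<Omega> \<Longrightarrow> i \<in> N \<Longrightarrow> 0 \<le> x w i \<and> x w i \<le> 1"
    and c0: "\<And>a b. (a, b) \<in> C \<Longrightarrow> (\<Sum>w\<in>\<Omega>. p w * (b - (\<Sum>i\<in>N. a i * x w i))) \<ge> 0"
    and c1: "\<And>a b j. (a, b) \<in> C \<Longrightarrow> j \<in> N \<Longrightarrow>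
       (\<Sum>w\<in>\<Omega>. p w * (x w j * ((b - (\<Sum>i\<in>N. a i * x w i)) - a j * (1 - x w j)))) \<ge> 0"
    and c2: "\<And>a b j. (a, b) \<in> C \<Longrightarrow> j \<in> N \<Longrightarrow>
       (\<Sum>w\<in>\<Omega>. p w * ((1 - x w j) * ((b - (\<Sum>i\<in>N. a i * x w i)) + a j * x w j))) \<ge> 0"
  shows "SA_feasible N C 1 (\<lambda>S. \<Sum>w\<in>\<Omega>. p w * (\<Prod>i\<in>S. x w i))"
proof (rule SA1_from_conds[OF fin sp])
  define LB where "LB = {((\<lambda>j. if j = i then -1 else (0::real)), 0::real) | i. i \<in> N}"
  define UB where "UB = {((\<lambda>j. if j = i then 1 else (0::real)), 1::real) | i. i \<in> N}"
  have wb: "with_bounds N C = C \<union> LB \<union> UB" unfolding with_bounds_def LB_def UB_def by simp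
  have nn: "(\<Sum>w\<in>\<Omega>. p w * f w) \<ge> 0" if "\<And>w. w \<in> \<Omega> \<Longrightarrow> f w \<ge> 0" for f
    using that pnn by (intro sum_nonneg mult_nonneg_nonneg) auto
  have bnd: "(\<Sum>w\<in>\<Omega>. p w * (b - (\<Sum>i\<in>N. a i * x w i))) \<ge> 0 \<and>
     (\<forall>j\<in>N. (\<Sum>w\<in>\<Omega>. p w * (x w j * ((b - (\<Sum>i\<in>N. a i * x w i)) - a j * (1 - x w j)))) \<ge> 0 \<and>
     (\<Sum>w\<in>\<Omega>. p w * ((1 - x w j) * ((b - (\<Sum>i\<in>N. a i * x w i)) + a j * x w j))) \<ge> 0)"
    if "(a, b) \<in> LB \<union> UB" for a b
  proof -
    from that obtain i c d where i: "i \<in> N" and ad: "a = (\<lambda>j. if j = i then c else 0)" "b = d"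
      and cd: "(c = -1 \<and> d = 0) \<or> (c = 1 \<and> d = 1)"
      unfolding LB_def UB_def by blast
    have S: "(\<Sum>k\<in>N. a k * x w k) = c * x w i" for w
      unfolding ad by (rule sum_indicator_lin[OF fin i])
    show ?thesis
    proof (intro conjI ballI)
      show "(\<Sum>w\<in>\<Omega>. p w * (b - (\<Sum>i\<in>N. a i * x w i))) \<ge> 0"
        unfolding S using cd x01[OF _ i] by (intro nn) (auto simp: ad)
    next
      fix j assume j: "j \<in> N"
      show "(\<Sum>w\<in>\<Omega>. p w * (x w j * ((b - (\<Sum>i\<in>N. a i * x w i)) - a j * (1 - x w j)))) \<ge> 0"
        unfolding S
      proof (intro nn)
        fix w assume w: "w \<in> \<Omega>"
        show "x w j * ((b - c * x w i) - a j * (1 - x w j)) \<ge> 0"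
          using cd x01[OF w i] x01[OF w j] by (cases "j = i") (auto simp: ad)
      qed
      show "(\<Sum>w\<in>\<Omega>. p w * ((1 - x w j) * ((b - (\<Sum>i\<in>N. a i * x w i)) + a j * x w j))) \<ge> 0"
        unfolding S
      proof (intro nn)
        fix w assume w: "w \<in> \<Omega>"
        show "(1 - x w j) * ((b - c * x w i) + a j * x w j) \<ge> 0"
          using cd x01[OF w i] x01[OF w j] by (cases "j = i") (auto simp: ad)
      qed
    qed
  qed
  show "(\<Sum>w\<in>\<Omega>. p w * (b - (\<Sum>i\<in>N. a i * x w i))) \<ge> 0" if "(a, b) \<in> with_bounds N C" for a b
    using that bnd c0 unfolding wb by blast
  show "(\<Sum>w\<in>\<Omega>. p w * (x w j * ((b - (\<Sum>i\<in>N. a i * x w i)) - a j * (1 - x w j)))) \<ge> 0"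
    if "(a, b) \<in> with_bounds N C" "j \<in> N" for a b j
    using that bnd c1 unfolding wb by blast
  show "(\<Sum>w\<in>\<Omega>. p w * ((1 - x w j) * ((b - (\<Sum>i\<in>N. a i * x w i)) + a j * x w j))) \<ge> 0"
    if "(a, b) \<in> with_bounds N C" "j \<in> N" for a b j
    using that bnd c2 unfolding wb by blast
qed




datatype vt = Src | Av nat nat | Bv nat nat nat | Pv nat nat nat | Cv nat nat nat | Pd nat

instance vt :: countable by countable_datatype

abbreviation Nv :: "vt \<Rightarrow> nat" where "Nv \<equiv> to_nat"

definition AAs :: "nat \<Rightarrow> vt set" where "AAs K = {Av u j | u j. u < K \<and> j < K^2}"
definition BBs :: "nat \<Rightarrow> vt set" where "BBs K = {Bv u j l | u j l. u < K \<and> j < K^2 \<and> l < K^2}"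
definition PPs :: "nat \<Rightarrow> vt set" where "PPs K = {Pv u j l | u j l. u < K \<and> j < K^2 \<and> l < K^2}"
definition CCs :: "nat \<Rightarrow> vt set" where "CCs K = {Cv u j t | u j t. u < K \<and> j < K^2 \<and> t < K}"
definition PDs :: "nat \<Rightarrow> vt set" where "PDs n = {Pd i | i. i < n}"

definition Va :: "nat \<Rightarrow> nat \<Rightarrow> vt set" where
  "Va K n = {Src} \<union> AAs K \<union> BBs K \<union> PPs K \<union> CCs K \<union> PDs n"

definition Ea :: "nat \<Rightarrow> (vt \<times> vt) set" where
  "Ea K = {(Src, Av u j) | u j. u < K \<and> j < K^2}
        \<union> {(Av u j, Bv u j l) | u j l. u < K \<and> j < K^2 \<and> l < K^2}
        \<union> {(Bv u j l, Pv u j l) | u j l. u < K \<and> j < K^2 \<and> l < K^2}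
        \<union> {(Bv u j l, Cv u j t) | u j l t. u < K \<and> j < K^2 \<and> l < K^2 \<and> t < K}"

definition La :: "nat \<Rightarrow> nat \<Rightarrow> nat \<Rightarrow> vt set" where
  "La K n i = (if i = 0 then {Src} else if i = 1 then AAs K else if i = 2 then BBs K
               else if i = 3 then PPs K \<union> CCs K \<union> PDs n else {})"

definition VV :: "nat \<Rightarrow> nat \<Rightarrow> nat set" where "VV K n = Nv ` Va K n"
definition EE :: "nat \<Rightarrow> edge set" where "EE K = map_prod Nv Nv ` Ea K"
definition LL :: "nat \<Rightarrow> nat \<Rightarrow> nat \<Rightarrow> nat set" where "LL K n i = Nv ` La K n i"

fun Xa :: "nat \<Rightarrow> nat \<Rightarrow> vt \<times> vt \<Rightarrow> real" where
  "Xa K w (Src, Av u j) = (if j = w then 1 else 0)"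
| "Xa K w (Av u j, Bv u' j' l) = (if l = w then 1 else if j = w then 1 / real K else 0)"
| "Xa K w (Bv u j l, Pv u' j' l') = (if l = w \<or> j = w then 1 else 0)"
| "Xa K w (Bv u j l, Cv u' j' t) = (if l = w then 1 else 0)"
| "Xa K w _ = 0"

definition XX :: "nat \<Rightarrow> nat \<Rightarrow> edge \<Rightarrow> real" where
  "XX K w e = Xa K w (from_nat (fst e), from_nat (snd e))"

lemma XX_map[simp]: "XX K w (map_prod Nv Nv e) = Xa K w e"
  by (cases e) (simp add: XX_def)

lemma inj_mp: "inj (map_prod Nv Nv)"
  by (simp add: prod.inj_map inj_to_nat)

lemma finite_Ea: "finite (Ea K)"
proof -
  have "Ea K \<subseteq> ({Src} \<union> AAs K \<union> BBs K) \<times> (AAs K \<union> BBs K \<union> PPs K \<union> CCs K)"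
    unfolding Ea_def AAs_def BBs_def PPs_def CCs_def by auto
  moreover have "finite (AAs K)"
  proof -
    have "AAs K = (\<lambda>(u,j). Av u j) ` ({..<K} \<times> {..<K^2})" unfolding AAs_def by auto
    then show ?thesis by simp
  qed
  moreover have "finite (BBs K)"
  proof -
    have "BBs K = (\<lambda>(u,j,l). Bv u j l) ` ({..<K} \<times> {..<K^2} \<times> {..<K^2})" unfolding BBs_def by (auto simp: image_iff)
    then show ?thesis by simp
  qed
  moreover have "finite (PPs K)"
  proof -
    have "PPs K = (\<lambda>(u,j,l). Pv u j l) ` ({..<K} \<times> {..<K^2} \<times> {..<K^2})" unfolding PPs_def by (auto simp: image_iff)
    then show ?thesis by simp
  qed
  moreover have "finite (CCs K)"
  proof -
    have "CCs K = (\<lambda>(u,j,l). Cv u j l) ` ({..<K} \<times> {..<K^2} \<times> {..<K})" unfolding CCs_def by (auto simp: image_iff)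
    then show ?thesis by simp
  qed
  ultimately show ?thesis by (meson finite_SigmaI finite_Un finite.emptyI finite.insertI finite_subset)
qed

definition outA :: "nat \<Rightarrow> nat \<Rightarrow> vt \<Rightarrow> real" where
  "outA K w v = (\<Sum>e\<in>{e\<in>Ea K. fst e = v}. Xa K w e)"
definition inA :: "nat \<Rightarrow> nat \<Rightarrow> vt \<Rightarrow> real" where
  "inA K w v = (\<Sum>e\<in>{e\<in>Ea K. snd e = v}. Xa K w e)"

lemma out_edges_EE: "out_edges (EE K) (Nv v) = map_prod Nv Nv ` {e\<in>Ea K. fst e = v}"
  unfolding out_edges_def EE_def by (auto simp: inj_eq inj_to_nat)
lemma in_edges_EE: "in_edges (EE K) (Nv v) = map_prod Nv Nv ` {e\<in>Ea K. snd e = v}"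
  unfolding in_edges_def EE_def by (auto simp: inj_eq inj_to_nat)

lemma out_sum: "(\<Sum>e\<in>out_edges (EE K) (Nv v). XX K w e) = outA K w v"
  unfolding out_edges_EE outA_def
  by (subst sum.reindex) (auto intro: inj_on_subset[OF inj_mp])
lemma in_sum: "(\<Sum>e\<in>in_edges (EE K) (Nv v). XX K w e) = inA K w v"
  unfolding in_edges_EE inA_def
  by (subst sum.reindex) (auto intro: inj_on_subset[OF inj_mp])

lemma sum_ifeq: "w < m \<Longrightarrow> (\<Sum>l<m. if l = w then (a::real) else b) = a + (real m - 1) * b"
proof -
  assume w: "w < m"
  have "(\<Sum>l<m. if l = w then a else b) = (\<Sum>l<m. b + (if l = w then a - b else 0))"
    by (intro sum.cong) auto
  also have "\<dots> = real m * b + (a - b)" using w by (simp add: sum.distrib)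
  finally show ?thesis by (simp add: algebra_simps)
qed

lemma edges_from_Src: "{e\<in>Ea K. fst e = Src} = (\<lambda>(u,j). (Src, Av u j)) ` ({..<K} \<times> {..<K^2})"
  unfolding Ea_def by (auto simp: image_iff)
lemma edges_to_Src: "{e\<in>Ea K. snd e = Src} = {}"
  unfolding Ea_def by auto
lemma edges_from_Av: "u < K \<Longrightarrow> j < K^2 \<Longrightarrow> {e\<in>Ea K. fst e = Av u j} = (\<lambda>l. (Av u j, Bv u j l)) ` {..<K^2}"
  unfolding Ea_def by auto
lemma edges_to_Av: "u < K \<Longrightarrow> j < K^2 \<Longrightarrow> {e\<in>Ea K. snd e = Av u j} = {(Src, Av u j)}"
  unfolding Ea_def by auto
lemma edges_from_Bv: "u < K \<Longrightarrow> j < K^2 \<Longrightarrow> l < K^2 \<Longrightarrow>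
   {e\<in>Ea K. fst e = Bv u j l} = insert (Bv u j l, Pv u j l) ((\<lambda>t. (Bv u j l, Cv u j t)) ` {..<K})"
  unfolding Ea_def by auto
lemma edges_to_Bv: "u < K \<Longrightarrow> j < K^2 \<Longrightarrow> l < K^2 \<Longrightarrow> {e\<in>Ea K. snd e = Bv u j l} = {(Av u j, Bv u j l)}"
  unfolding Ea_def by auto
lemma edges_from_Pv: "{e\<in>Ea K. fst e = Pv u j l} = {}"
  unfolding Ea_def by auto
lemma edges_to_Pv: "u < K \<Longrightarrow> j < K^2 \<Longrightarrow> l < K^2 \<Longrightarrow> {e\<in>Ea K. snd e = Pv u j l} = {(Bv u j l, Pv u j l)}"
  unfolding Ea_def by auto
lemma edges_from_Cv: "{e\<in>Ea K. fst e = Cv u j t} = {}"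
  unfolding Ea_def by auto
lemma edges_to_Cv: "u < K \<Longrightarrow> j < K^2 \<Longrightarrow> t < K \<Longrightarrow> {e\<in>Ea K. snd e = Cv u j t} = (\<lambda>l. (Bv u j l, Cv u j t)) ` {..<K^2}"
  unfolding Ea_def by auto
lemma edges_from_Pd: "{e\<in>Ea K. fst e = Pd i} = {}"
  unfolding Ea_def by auto
lemma edges_to_Pd: "{e\<in>Ea K. snd e = Pd i} = {}"
  unfolding Ea_def by auto

lemma outA_Src: "w < K^2 \<Longrightarrow> outA K w Src = real K"
proof -
  assume w: "w < K^2"
  have "outA K w Src = (\<Sum>(u,j)\<in>{..<K} \<times> {..<K^2}. Xa K w (Src, Av u j))"
    unfolding outA_def edges_from_Src
    by (subst sum.reindex) (auto simp: inj_on_def case_prod_beta)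
  also have "\<dots> = (\<Sum>u<K. \<Sum>j<K^2. if j = w then 1 else 0)"
    by (simp add: sum.cartesian_product[symmetric])
  also have "\<dots> = real K" using w by simp
  finally show ?thesis .
qed
lemma inA_Src: "inA K w Src = 0"
  unfolding inA_def edges_to_Src by simp

lemma outA_Av: "u < K \<Longrightarrow> j < K^2 \<Longrightarrow> w < K^2 \<Longrightarrow>
   outA K w (Av u j) = 1 + (if j = w then (real (K^2) - 1) / real K else 0)"
proof -
  assume a: "u < K" "j < K^2" and w: "w < K^2"
  have "outA K w (Av u j) = (\<Sum>l<K^2. Xa K w (Av u j, Bv u j l))"
    unfolding outA_def edges_from_Av[OF a]
    by (subst sum.reindex) (auto simp: inj_on_def)
  also have "\<dots> = (\<Sum>l<K^2. if l = w then 1 else (if j = w then 1 / real K else 0))"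
    by simp
  also have "\<dots> = 1 + (if j = w then (real (K^2) - 1) / real K else 0)"
    using sum_ifeq[OF w, of 1 "if j = w then 1 / real K else 0"] by simp
  finally show ?thesis .
qed
lemma inA_Av: "u < K \<Longrightarrow> j < K^2 \<Longrightarrow> inA K w (Av u j) = (if j = w then 1 else 0)"
  unfolding inA_def by (simp add: edges_to_Av)

lemma outA_Bv: "u < K \<Longrightarrow> j < K^2 \<Longrightarrow> l < K^2 \<Longrightarrow>
   outA K w (Bv u j l) = (if l = w \<or> j = w then 1 else 0) + (if l = w then real K else 0)"
proof -
  assume a: "u < K" "j < K^2" "l < K^2"
  have "outA K w (Bv u j l) = Xa K w (Bv u j l, Pv u j l) + (\<Sum>t<K. Xa K w (Bv u j l, Cv u j t))"
    unfolding outA_def edges_from_Bv[OF a]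
    by (subst sum.insert) (auto simp: sum.reindex inj_on_def)
  then show ?thesis by simp
qed
lemma inA_Bv: "u < K \<Longrightarrow> j < K^2 \<Longrightarrow> l < K^2 \<Longrightarrow>
   inA K w (Bv u j l) = (if l = w then 1 else if j = w then 1 / real K else 0)"
  unfolding inA_def by (simp add: edges_to_Bv)

lemma outA_Pv: "outA K w (Pv u j l) = 0"
  unfolding outA_def edges_from_Pv by simp
lemma inA_Pv: "u < K \<Longrightarrow> j < K^2 \<Longrightarrow> l < K^2 \<Longrightarrow> inA K w (Pv u j l) = (if l = w \<or> j = w then 1 else 0)"
  unfolding inA_def by (simp add: edges_to_Pv)
lemma outA_Cv: "outA K w (Cv u j t) = 0"
  unfolding outA_def edges_from_Cv by simp
lemma inA_Cv: "u < K \<Longrightarrow> j < K^2 \<Longrightarrow> t < K \<Longrightarrow> w < K^2 \<Longrightarrow> inA K w (Cv u j t) = 1"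
proof -
  assume a: "u < K" "j < K^2" "t < K" and w: "w < K^2"
  have "inA K w (Cv u j t) = (\<Sum>l<K^2. Xa K w (Bv u j l, Cv u j t))"
    unfolding inA_def edges_to_Cv[OF a]
    by (subst sum.reindex) (auto simp: inj_on_def)
  also have "\<dots> = 1" using w by simp
  finally show ?thesis .
qed
lemma outA_Pd: "outA K w (Pd i) = 0"
  unfolding outA_def edges_from_Pd by simp
lemma inA_Pd: "inA K w (Pd i) = 0"
  unfolding inA_def edges_to_Pd by simp




definition aS :: "nat \<Rightarrow> edge \<Rightarrow> real" where
  "aS K = (\<lambda>e. if e \<in> out_edges (EE K) (Nv Src) then -1 else 0)"
definition aV :: "nat \<Rightarrow> nat \<Rightarrow> edge \<Rightarrow> real" where
  "aV K v = (\<lambda>e. (if e \<in> in_edges (EE K) v then real K else 0) - (if e \<in> out_edges (EE K) v then 1 else 0))"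
definition aC :: "nat \<Rightarrow> nat \<Rightarrow> edge \<Rightarrow> real" where
  "aC K v = (\<lambda>e. if e \<in> in_edges (EE K) v then 1 else 0)"

lemma inj_Nv: "Nv x = Nv y \<longleftrightarrow> x = y" by (simp add: inj_eq inj_to_nat)

lemma La_disj: "La K n 3 \<inter> ({Src} \<union> AAs K \<union> BBs K) = {}"
  unfolding La_def AAs_def BBs_def PPs_def CCs_def PDs_def by auto

lemma V_minus: "VV K n - ({Nv Src} \<union> LL K n 3) = Nv ` (AAs K \<union> BBs K)"
proof -
  have "VV K n - ({Nv Src} \<union> LL K n 3) = Nv ` (Va K n - ({Src} \<union> La K n 3))"
    unfolding VV_def LL_def by (auto simp: inj_Nv)
  also have "Va K n - ({Src} \<union> La K n 3) = AAs K \<union> BBs K"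
    unfolding Va_def La_def AAs_def BBs_def PPs_def CCs_def PDs_def by auto
  finally show ?thesis .
qed

lemma constraint_cases:
  assumes "(a, b) \<in> assignment_LP (VV K n) (EE K) (Nv Src) 3 (LL K n) (\<lambda>u. real K)"
  shows "(a = aS K \<and> b = - real K) \<or> (\<exists>u\<in>AAs K \<union> BBs K. a = aV K (Nv u) \<and> b = 0)
         \<or> (\<exists>u\<in>Va K n. a = aC K (Nv u) \<and> b = 1)"
proof -
  have V: "VV K n = Nv ` Va K n" by (simp add: VV_def)
  from assms show ?thesis
    unfolding assignment_LP_def V_minus
    by (auto simp: aS_def aV_def aC_def V)
qed

lemma finite_EE: "finite (EE K)" unfolding EE_def using finite_Ea by simp

lemma sum_ind: "A \<subseteq> E \<Longrightarrow> finite E \<Longrightarrow> (\<Sum>e\<in>E. (if e \<in> A then c else 0) * (f e::real)) = c * (\<Sum>e\<in>A. f e)"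
proof -
  assume "A \<subseteq> E" "finite E"
  then have "(\<Sum>e\<in>E. (if e \<in> A then c else 0) * f e) = (\<Sum>e\<in>E. if e \<in> A then c * f e else 0)"
    by (intro sum.cong) auto
  also have "\<dots> = (\<Sum>e\<in>E \<inter> A. c * f e)" using \<open>finite E\<close> by (simp add: sum.inter_restrict)
  also have "E \<inter> A = A" using \<open>A \<subseteq> E\<close> by auto
  finally show ?thesis by (simp add: sum_distrib_left)
qed

lemma out_sub: "out_edges E v \<subseteq> E" unfolding out_edges_def by auto
lemma in_sub: "in_edges E v \<subseteq> E" unfolding in_edges_def by auto

lemma gS: "w < K^2 \<Longrightarrow> - real K - (\<Sum>e\<in>EE K. aS K e * XX K w e) = 0"
proof -
  assume w: "w < K^2"
  have "(\<Sum>e\<in>EE K. aS K e * XX K w e) = - (\<Sum>e\<in>out_edges (EE K) (Nv Src). XX K w e)"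
    unfolding aS_def by (subst sum_ind[OF out_sub finite_EE]) simp
  then show ?thesis using outA_Src[OF w] by (simp add: out_sum)
qed

lemma gV: "0 - (\<Sum>e\<in>EE K. aV K (Nv u) e * XX K w e) = outA K w u - real K * inA K w u"
proof -
  have "(\<Sum>e\<in>EE K. aV K (Nv u) e * XX K w e)
     = (\<Sum>e\<in>EE K. (if e \<in> in_edges (EE K) (Nv u) then real K else 0) * XX K w e)
       - (\<Sum>e\<in>EE K. (if e \<in> out_edges (EE K) (Nv u) then 1 else 0) * XX K w e)"
    unfolding aV_def by (simp add: left_diff_distrib sum_subtractf)
  also have "\<dots> = real K * inA K w u - outA K w u"
    by (simp add: sum_ind[OF in_sub finite_EE] sum_ind[OF out_sub finite_EE] in_sum out_sum)
  finally show ?thesis by simp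
qed

lemma gC: "1 - (\<Sum>e\<in>EE K. aC K (Nv u) e * XX K w e) = 1 - inA K w u"
  unfolding aC_def by (simp add: sum_ind[OF in_sub finite_EE] in_sum)

lemma gV_nonneg:
  assumes K: "K \<ge> 2" and w: "w < K^2" and u: "u \<in> AAs K \<union> BBs K"
  shows "outA K w u - real K * inA K w u \<ge> 0"
proof -
  have K0: "real K > 0" using K by simp
  from u consider (A) uu j where "u = Av uu j" "uu < K" "j < K^2"
    | (B) uu j l where "u = Bv uu j l" "uu < K" "j < K^2" "l < K^2"
    unfolding AAs_def BBs_def by blast
  then show ?thesis
  proof cases
    case A
    have "real K \<le> 1 + (real (K^2) - 1) / real K"
    proof -
      have "real K * real K \<le> real K + (real (K^2) - 1)" using K by (simp add: power2_eq_square)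
      then show ?thesis using K0 by (simp add: field_simps)
    qed
    then show ?thesis using A w by (simp add: outA_Av inA_Av)
  next
    case B
    then show ?thesis using w K0 by (simp add: outA_Bv inA_Bv)
  qed
qed

lemma gC_nonneg:
  assumes K: "K \<ge> 2" and w: "w < K^2" and u: "u \<in> Va K n"
  shows "1 - inA K w u \<ge> 0"
proof -
  have K0: "real K \<ge> 1" using K by simp
  from u show ?thesis
    unfolding Va_def AAs_def BBs_def PPs_def CCs_def PDs_def
    using K0 w by (auto simp: inA_Src inA_Av inA_Bv inA_Pv inA_Cv inA_Pd)
qed




lemma EE_cases: "j \<in> EE K \<Longrightarrow> \<exists>j0\<in>Ea K. j = map_prod Nv Nv j0"
  unfolding EE_def by (simp add: image_iff)

lemma mem_out: "j0 \<in> Ea K \<Longrightarrow> map_prod Nv Nv j0 \<in> out_edges (EE K) (Nv u) \<longleftrightarrow> fst j0 = u"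
  unfolding out_edges_def EE_def by (cases j0) (auto simp: inj_Nv)
lemma mem_in: "j0 \<in> Ea K \<Longrightarrow> map_prod Nv Nv j0 \<in> in_edges (EE K) (Nv u) \<longleftrightarrow> snd j0 = u"
  unfolding in_edges_def EE_def by (cases j0) (auto simp: inj_Nv)

lemma aS_val: "j0 \<in> Ea K \<Longrightarrow> aS K (map_prod Nv Nv j0) = (if fst j0 = Src then -1 else 0)"
  unfolding aS_def by (simp add: mem_out)
lemma aV_val: "j0 \<in> Ea K \<Longrightarrow> aV K (Nv u) (map_prod Nv Nv j0) = (if snd j0 = u then real K else 0) - (if fst j0 = u then 1 else 0)"
  unfolding aV_def by (simp add: mem_out mem_in)
lemma aC_val: "j0 \<in> Ea K \<Longrightarrow> aC K (Nv u) (map_prod Nv Nv j0) = (if snd j0 = u then 1 else 0)"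
  unfolding aC_def by (simp add: mem_in)

lemma Xa_01: "K \<ge> 1 \<Longrightarrow> 0 \<le> Xa K w e \<and> Xa K w e \<le> 1"
  by (cases "(K, w, e)" rule: Xa.cases) auto

lemma Xa_cases:
  assumes "j0 \<in> Ea K"
  shows "Xa K w j0 = 0 \<or> Xa K w j0 = 1 \<or>
    (\<exists>u l. j0 = (Av u w, Bv u w l) \<and> u < K \<and> w < K^2 \<and> l < K^2 \<and> l \<noteq> w \<and> Xa K w j0 = 1 / real K)"
  using assms unfolding Ea_def by (auto split: if_split_asm)

lemma P01: "(x::real) = 0 \<or> x = 1 \<Longrightarrow> g \<ge> 0 \<Longrightarrow> x * (g - a * (1 - x)) \<ge> 0 \<and> (1 - x) * (g + a * x) \<ge> 0"
  by auto
lemma Pneg: "0 \<le> (x::real) \<Longrightarrow> x \<le> 1 \<Longrightarrow> g \<ge> 0 \<Longrightarrow> a \<le> 0 \<Longrightarrow> x * (g - a * (1 - x)) \<ge> 0"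
proof -
  assume "0 \<le> x" "x \<le> 1" "g \<ge> 0" "a \<le> 0"
  moreover have "a * (1 - x) \<le> 0" using \<open>a \<le> 0\<close> \<open>x \<le> 1\<close> by (intro mult_nonpos_nonneg) auto
  ultimately show ?thesis by (intro mult_nonneg_nonneg) auto
qed
lemma Ppos: "0 \<le> (x::real) \<Longrightarrow> x \<le> 1 \<Longrightarrow> g \<ge> 0 \<Longrightarrow> a \<ge> 0 \<Longrightarrow> (1 - x) * (g + a * x) \<ge> 0"
  by (intro mult_nonneg_nonneg) auto

lemma sum2: "l < (m::nat) \<Longrightarrow> jj < m \<Longrightarrow>
  (\<Sum>w<m. if w = l then (A::real) else if w = jj then B else 0) = A + (if jj = l then 0 else B)"
proof -
  assume a: "l < m" "jj < m"
  have "(\<Sum>w<m. if w = l then A else if w = jj then B else 0)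
      = (\<Sum>w<m. (if w = l then A else 0) + (if jj \<noteq> l then (if w = jj then B else 0) else 0))"
    by (intro sum.cong) auto
  also have "\<dots> = A + (if jj = l then 0 else B)" using a by (cases "jj = l") (simp_all add: sum.distrib sum.delta)
  finally show ?thesis .
qed

lemma sum_nn: "(\<And>w. w < m \<Longrightarrow> 0 \<le> f w) \<Longrightarrow> 0 \<le> (\<Sum>w\<in>{..<m}. (1 / real m) * (f w::real))"
  by (intro sum_nonneg mult_nonneg_nonneg) auto

lemma gAv_val: "K \<ge> 2 \<Longrightarrow> uu < K \<Longrightarrow> w < K^2 \<Longrightarrow>
  outA K w (Av uu w) - real K * inA K w (Av uu w) = 1 - 1 / real K"
proof -
  assume K: "K \<ge> 2" and a: "uu < K" "w < K^2"
  have K0: "real K > 0" using K by simp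
  have "outA K w (Av uu w) - real K * inA K w (Av uu w) = 1 + (real K * real K - 1) / real K - real K"
    using a by (simp add: outA_Av inA_Av power2_eq_square)
  also have "\<dots> = 1 - 1 / real K" using K0 by (simp add: field_simps)
  finally show ?thesis .
qed

context fixes K n :: nat assumes K2: "K \<ge> 2"
begin

abbreviation "CC \<equiv> assignment_LP (VV K n) (EE K) (Nv Src) 3 (LL K n) (\<lambda>u. real K)"

lemma Kpos: "real K \<ge> 2" using K2 by simp

lemma x01: "0 \<le> XX K w j \<and> XX K w j \<le> 1"
  unfolding XX_def using Xa_01[of K w] K2 by simp

lemma g_nonneg: "(a, b) \<in> CC \<Longrightarrow> w < K^2 \<Longrightarrow> b - (\<Sum>i\<in>EE K. a i * XX K w i) \<ge> 0"
proof -
  assume ab: "(a, b) \<in> CC" and w: "w < K^2"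
  from constraint_cases[OF ab] consider "a = aS K" "b = - real K"
    | u where "u \<in> AAs K \<union> BBs K" "a = aV K (Nv u)" "b = 0"
    | u where "u \<in> Va K n" "a = aC K (Nv u)" "b = 1" by blast
  then show ?thesis
  proof cases
    case 1 then show ?thesis using gS[OF w] by simp
  next
    case (2 u) then show ?thesis using gV[of K u w] gV_nonneg[OF K2 w 2(1)] by simp
  next
    case (3 u) then show ?thesis using gC[of K u w] gC_nonneg[OF K2 w 3(1)] by simp
  qed
qed

lemma c2_ok:
  assumes ab: "(a, b) \<in> CC" and j: "j \<in> EE K" and w: "w < K^2"
  shows "(1 - XX K w j) * ((b - (\<Sum>i\<in>EE K. a i * XX K w i)) + a j * XX K w j) \<ge> 0"
proof -
  obtain j0 where j0: "j0 \<in> Ea K" and jd: "j = map_prod Nv Nv j0" using EE_cases[OF j] by blast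
  have xj: "XX K w j = Xa K w j0" by (simp add: jd)
  have ajS: "aS K j = (if fst j0 = Src then -1 else 0)" using aS_val[OF j0] jd by simp
  have ajV: "aV K (Nv u) j = (if snd j0 = u then real K else 0) - (if fst j0 = u then 1 else 0)" for u
    using aV_val[OF j0] jd by simp
  have ajC: "aC K (Nv u) j = (if snd j0 = u then 1 else 0)" for u using aC_val[OF j0] jd by simp
  have g0: "b - (\<Sum>i\<in>EE K. a i * XX K w i) \<ge> 0" by (rule g_nonneg[OF ab w])
  have x0: "0 \<le> Xa K w j0" "Xa K w j0 \<le> 1" using x01[of w j] xj by auto
  from Xa_cases[OF j0, of w]
  consider "Xa K w j0 = 0 \<or> Xa K w j0 = 1"
    | uu l where "j0 = (Av uu w, Bv uu w l)" "uu < K" "l < K^2" "l \<noteq> w" "Xa K w j0 = 1 / real K"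
    by blast
  then show ?thesis
  proof cases
    case 1 then show ?thesis using P01[OF _ g0] xj by simp
  next
    case (2 uu l)
    note fr = 2
    from constraint_cases[OF ab] consider "a = aS K" "b = - real K"
      | u where "u \<in> AAs K \<union> BBs K" "a = aV K (Nv u)" "b = 0"
      | u where "u \<in> Va K n" "a = aC K (Nv u)" "b = 1" by blast
    then show ?thesis
    proof cases
      case 1
      have "a j = 0" using 1 fr j0 by (simp add: ajS)
      then show ?thesis using Ppos[OF x0 g0, of "a j"] xj by simp
    next
      case (3 u)
      have "a j \<ge> 0" using 3 fr j0 by (simp add: ajC)
      then show ?thesis using Ppos[OF x0 g0, of "a j"] xj by simp
    next
      case (2 u)
      show ?thesis
      proof (cases "u = Av uu w")
        case True
        have aj: "a j = -1" using 2 fr j0 True by (simp add: ajV)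
        have g: "b - (\<Sum>i\<in>EE K. a i * XX K w i) = 1 - 1 / real K"
          using gV[of K u w] gAv_val[OF K2 fr(2) w] 2 True by simp
        have "0 \<le> (1 - 1 / real K) * (1 - 1 / real K + - 1 * (1 / real K))"
          using Kpos by (intro mult_nonneg_nonneg) (auto simp: field_simps)
        then show ?thesis using aj g xj fr(5) by simp
      next
        case False
        have "a j \<ge> 0" using 2 fr j0 False by (simp add: ajV)
        then show ?thesis using Ppos[OF x0 g0, of "a j"] xj by simp
      qed
    qed
  qed
qed


lemma c1_ok:
  assumes ab: "(a, b) \<in> CC" and j: "j \<in> EE K"
  shows "(\<Sum>w\<in>{..<K^2}. (1 / real (K^2)) * (XX K w j * ((b - (\<Sum>i\<in>EE K. a i * XX K w i)) - a j * (1 - XX K w j)))) \<ge> 0"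
proof -
  obtain j0 where j0: "j0 \<in> Ea K" and jd: "j = map_prod Nv Nv j0" using EE_cases[OF j] by blast
  have xj: "XX K w j = Xa K w j0" for w by (simp add: jd)
  have ajS: "aS K j = (if fst j0 = Src then -1 else 0)" using aS_val[OF j0] jd by simp
  have ajV: "aV K (Nv u) j = (if snd j0 = u then real K else 0) - (if fst j0 = u then 1 else 0)" for u
    using aV_val[OF j0] jd by simp
  have ajC: "aC K (Nv u) j = (if snd j0 = u then 1 else 0)" for u using aC_val[OF j0] jd by simp
  show ?thesis
  proof (cases "\<exists>uu jj l. j0 = (Av uu jj, Bv uu jj l) \<and> a = aV K (Nv (Bv uu jj l)) \<and> b = 0")
    case True
    then obtain uu jj l where jj: "j0 = (Av uu jj, Bv uu jj l)" and ad: "a = aV K (Nv (Bv uu jj l))" "b = 0"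
      by blast
    have r: "uu < K" "jj < K^2" "l < K^2" using j0 jj unfolding Ea_def by auto
    have aj: "a j = real K" using ajV ad jj by simp
    have tm: "XX K w j * ((b - (\<Sum>i\<in>EE K. a i * XX K w i)) - a j * (1 - XX K w j))
        = (if w = l then 1 else if w = jj then (1 - real K) / real K else 0)" for w
    proof -
      have "b - (\<Sum>i\<in>EE K. a i * XX K w i) = outA K w (Bv uu jj l) - real K * inA K w (Bv uu jj l)"
        using gV[of K "Bv uu jj l" w] ad by simp
      then show ?thesis using aj r Kpos by (simp add: xj jj outA_Bv inA_Bv field_simps)
    qed
    have "(\<Sum>w\<in>{..<K^2}. (1 / real (K^2)) * (XX K w j * ((b - (\<Sum>i\<in>EE K. a i * XX K w i)) - a j * (1 - XX K w j))))
        = (1 / real (K^2)) * (1 + (if jj = l then 0 else (1 - real K) / real K))"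
      unfolding tm sum_distrib_left[symmetric] using sum2[OF r(3) r(2)] by simp
    moreover have "1 + (if jj = l then 0 else (1 - real K) / real K) \<ge> 0"
      using Kpos by (auto simp: field_simps)
    ultimately show ?thesis by simp
  next
    case False
    show ?thesis
    proof (rule sum_nn)
      fix w assume w: "w < K^2"
      have g0: "b - (\<Sum>i\<in>EE K. a i * XX K w i) \<ge> 0" by (rule g_nonneg[OF ab w])
      have x0: "0 \<le> Xa K w j0" "Xa K w j0 \<le> 1" using x01[of w j] xj by auto
      from Xa_cases[OF j0, of w]
      consider "Xa K w j0 = 0 \<or> Xa K w j0 = 1"
        | uu l where "j0 = (Av uu w, Bv uu w l)" "uu < K" "l < K^2" "l \<noteq> w" "Xa K w j0 = 1 / real K"
        by blast
      then show "XX K w j * ((b - (\<Sum>i\<in>EE K. a i * XX K w i)) - a j * (1 - XX K w j)) \<ge> 0"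
      proof cases
        case 1 then show ?thesis using P01[OF _ g0] xj by simp
      next
        case (2 uu l)
        note fr = 2
        from constraint_cases[OF ab] consider "a = aS K" "b = - real K"
          | u where "u \<in> AAs K \<union> BBs K" "a = aV K (Nv u)" "b = 0"
          | u where "u \<in> Va K n" "a = aC K (Nv u)" "b = 1" by blast
        then show ?thesis
        proof cases
          case 1
          have "a j \<le> 0" using 1 fr j0 by (simp add: ajS)
          then show ?thesis using Pneg[OF x0 g0, of "a j"] xj by simp
        next
          case (2 u)
          have "u \<noteq> Bv uu w l" using False fr 2 by blast
          then have "a j \<le> 0" using 2 fr j0 by (simp add: ajV)
          then show ?thesis using Pneg[OF x0 g0, of "a j"] xj by simp
        next
          case (3 u)
          show ?thesis
          proof (cases "u = Bv uu w l")
            case True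
            have aj: "a j = 1" using 3 fr True by (simp add: ajC)
            have g: "b - (\<Sum>i\<in>EE K. a i * XX K w i) = 1 - 1 / real K"
              using gC[of K u w] 3 True fr inA_Bv[OF fr(2) w fr(3), of w] by simp
            show ?thesis using aj g xj fr(5) by simp
          next
            case False
            have "a j \<le> 0" using 3 fr j0 False by (simp add: ajC)
            then show ?thesis using Pneg[OF x0 g0, of "a j"] xj by simp
          qed
        qed
      qed
    qed
  qed
qed

lemma SA_inst: "SA_feasible (EE K) CC 1 (\<lambda>S. \<Sum>w\<in>{..<K^2}. (1 / real (K^2)) * (\<Prod>i\<in>S. XX K w i))"
proof (rule SA1_mixture[OF finite_EE])
  show "(\<Sum>w\<in>{..<K^2}. 1 / real (K^2)) = 1" using K2 by simp
  show "\<And>w. w \<in> {..<K^2} \<Longrightarrow> 0 \<le> 1 / real (K^2)" by simp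
  show "\<And>w i. w \<in> {..<K^2} \<Longrightarrow> i \<in> EE K \<Longrightarrow> 0 \<le> XX K w i \<and> XX K w i \<le> 1" using x01 by blast
  show "\<And>a b. (a, b) \<in> CC \<Longrightarrow> 0 \<le> (\<Sum>w\<in>{..<K^2}. 1 / real (K^2) * (b - (\<Sum>i\<in>EE K. a i * XX K w i)))"
    using g_nonneg by (intro sum_nn) auto
  show "\<And>a b j. (a, b) \<in> CC \<Longrightarrow> j \<in> EE K \<Longrightarrow>
      0 \<le> (\<Sum>w\<in>{..<K^2}. 1 / real (K^2) * (XX K w j * (b - (\<Sum>i\<in>EE K. a i * XX K w i) - a j * (1 - XX K w j))))"
    using c1_ok by blast
  show "\<And>a b j. (a, b) \<in> CC \<Longrightarrow> j \<in> EE K \<Longrightarrow>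
      0 \<le> (\<Sum>w\<in>{..<K^2}. 1 / real (K^2) * ((1 - XX K w j) * (b - (\<Sum>i\<in>EE K. a i * XX K w i) + a j * XX K w j)))"
    using c2_ok by (intro sum_nn) auto
qed

end




lemma fin_AAs: "finite (AAs K)" and card_AAs: "card (AAs K) \<le> K * K^2"
proof -
  have e: "AAs K = (\<lambda>(u,j). Av u j) ` ({..<K} \<times> {..<K^2})" unfolding AAs_def by auto
  show "finite (AAs K)" unfolding e by simp
  show "card (AAs K) \<le> K * K^2" unfolding e by (rule order_trans[OF card_image_le]) (simp_all add: card_cartesian_product)
qed
lemma fin_BBs: "finite (BBs K)" and card_BBs: "card (BBs K) \<le> K * K^2 * K^2"
proof -
  have e: "BBs K = (\<lambda>(u,j,l). Bv u j l) ` ({..<K} \<times> {..<K^2} \<times> {..<K^2})" unfolding BBs_def by (auto simp: image_iff)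
  show "finite (BBs K)" unfolding e by simp
  show "card (BBs K) \<le> K * K^2 * K^2" unfolding e by (rule order_trans[OF card_image_le]) (simp_all add: card_cartesian_product)
qed
lemma fin_PPs: "finite (PPs K)" and card_PPs: "card (PPs K) \<le> K * K^2 * K^2"
proof -
  have e: "PPs K = (\<lambda>(u,j,l). Pv u j l) ` ({..<K} \<times> {..<K^2} \<times> {..<K^2})" unfolding PPs_def by (auto simp: image_iff)
  show "finite (PPs K)" unfolding e by simp
  show "card (PPs K) \<le> K * K^2 * K^2" unfolding e by (rule order_trans[OF card_image_le]) (simp_all add: card_cartesian_product)
qed
lemma fin_CCs: "finite (CCs K)" and card_CCs: "card (CCs K) \<le> K * K^2 * K"
proof -
  have e: "CCs K = (\<lambda>(u,j,l). Cv u j l) ` ({..<K} \<times> {..<K^2} \<times> {..<K})" unfolding CCs_def by (auto simp: image_iff)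
  show "finite (CCs K)" unfolding e by simp
  show "card (CCs K) \<le> K * K^2 * K" unfolding e by (rule order_trans[OF card_image_le]) (simp_all add: card_cartesian_product)
qed
lemma fin_PDs: "finite (PDs n)" and card_PDs: "card (PDs n) = n"
proof -
  have e: "PDs n = Pd ` {..<n}" unfolding PDs_def by auto
  show "finite (PDs n)" unfolding e by simp
  show "card (PDs n) = n" unfolding e by (simp add: card_image inj_on_def)
qed

lemma fin_Va: "finite (Va K n)"
  unfolding Va_def using fin_AAs fin_BBs fin_PPs fin_CCs fin_PDs by simp

lemma card_VV:
  assumes "1 + K * K^2 + K * K^2 * K^2 + K * K^2 * K^2 + K * K^2 * K \<le> n"
  shows "n \<le> card (VV K n)" "card (VV K n) \<le> 2 * n"
proof -
  have cV: "card (VV K n) = card (Va K n)" unfolding VV_def by (simp add: card_image inj_on_def inj_Nv)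
  have "PDs n \<subseteq> Va K n" unfolding Va_def by auto
  then show "n \<le> card (VV K n)" using card_mono[OF fin_Va] card_PDs cV by metis
  have "card (Va K n) \<le> card {Src} + card (AAs K) + card (BBs K) + card (PPs K) + card (CCs K) + card (PDs n)"
    unfolding Va_def by (rule order_trans[OF card_Un_le] add_mono card_Un_le order_refl)+
  then show "card (VV K n) \<le> 2 * n"
    using card_AAs[of K] card_BBs[of K] card_PPs[of K] card_CCs[of K] card_PDs[of n] assms cV by simp
qed

lemma mmda_inst: "K \<ge> 1 \<Longrightarrow> mmda_instance (VV K n) (EE K) (Nv Src) 3 (LL K n) (\<lambda>_. K)"
proof -
  assume K: "K \<ge> 1"
  have U: "{0..3::nat} = {0,1,2,3}" by auto
  have U2: "{0..<3::nat} = {0,1,2}" by auto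
  have fin: "finite (VV K n)" unfolding VV_def using fin_Va by simp
  have cov: "VV K n = (\<Union>i\<in>{0..3}. LL K n i)"
    unfolding VV_def LL_def U La_def Va_def by auto
  have dis: "\<forall>i\<in>{0..3}. \<forall>j\<in>{0..3}. i \<noteq> j \<longrightarrow> LL K n i \<inter> LL K n j = {}"
  proof (intro ballI impI)
    fix i j :: nat assume "i \<in> {0..3}" "j \<in> {0..3}" "i \<noteq> j"
    then have "La K n i \<inter> La K n j = {}"
      unfolding La_def AAs_def BBs_def PPs_def CCs_def PDs_def U by auto
    then show "LL K n i \<inter> LL K n j = {}" unfolding LL_def by (auto simp: inj_Nv)
  qed
  have L0: "LL K n 0 = {Nv Src}" unfolding LL_def La_def by simp
  have Esub: "EE K \<subseteq> (\<Union>i\<in>{0..<3}. LL K n i \<times> LL K n (Suc i))"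
    unfolding EE_def LL_def U2 La_def Ea_def AAs_def BBs_def PPs_def CCs_def by auto
  show ?thesis unfolding mmda_instance_def layered_graph_def
    using fin cov dis L0 Esub K by auto
qed




lemma EE_from_Src: "e \<in> EE K \<Longrightarrow> fst e = Nv Src \<Longrightarrow> \<exists>uu jj. uu < K \<and> jj < K^2 \<and> e = (Nv Src, Nv (Av uu jj))"
  unfolding EE_def Ea_def by (auto simp: inj_Nv)
lemma EE_from_Av: "e \<in> EE K \<Longrightarrow> fst e = Nv (Av uu jj) \<Longrightarrow> \<exists>l. l < K^2 \<and> e = (Nv (Av uu jj), Nv (Bv uu jj l))"
  unfolding EE_def Ea_def by (auto simp: inj_Nv)
lemma EE_from_Bv: "e \<in> EE K \<Longrightarrow> fst e = Nv (Bv uu jj l) \<Longrightarrow>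
   e = (Nv (Bv uu jj l), Nv (Pv uu jj l)) \<or> (\<exists>t. t < K \<and> e = (Nv (Bv uu jj l), Nv (Cv uu jj t)))"
  unfolding EE_def Ea_def by (auto simp: inj_Nv)

lemma Av_mem: "uu < K \<Longrightarrow> jj < K^2 \<Longrightarrow> Nv (Av uu jj) \<in> VV K n - LL K n 3 - {Nv Src}"
  unfolding VV_def LL_def Va_def La_def AAs_def BBs_def PPs_def CCs_def PDs_def by (auto simp: inj_Nv)
lemma Bv_mem: "uu < K \<Longrightarrow> jj < K^2 \<Longrightarrow> l < K^2 \<Longrightarrow> Nv (Bv uu jj l) \<in> VV K n - LL K n 3 - {Nv Src}"
  unfolding VV_def LL_def Va_def La_def AAs_def BBs_def PPs_def CCs_def PDs_def by (auto simp: inj_Nv)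
lemma Cv_mem: "uu < K \<Longrightarrow> jj < K^2 \<Longrightarrow> t < K \<Longrightarrow> Nv (Cv uu jj t) \<in> VV K n"
  unfolding VV_def Va_def CCs_def by auto

lemma final_arith:
  fixes r K :: real
  assumes "r > 0" "K \<ge> 1" "r \<ge> 1 \<longrightarrow> r * (r - 1) \<le> K"
  shows "r^2 \<le> 4 * K"
proof (cases "r \<ge> 2")
  case True
  then have "r * (r - 1) \<le> K" using assms by auto
  moreover have "r^2 \<le> 2 * (r * (r - 1))"
  proof -
    have "0 \<le> r * (r - 2)" using True by simp
    then show ?thesis by (simp add: power2_eq_square algebra_simps)
  qed
  ultimately show ?thesis using assms by linarith
next
  case False
  then have "r * r \<le> 2 * 2" using assms(1) mult_mono[of r 2 r 2] by auto
  then have "r^2 \<le> 4" by (simp add: power2_eq_square)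
  then show ?thesis using assms by linarith
qed

lemma integral_lb:
  assumes K: "K \<ge> 1" and al: "\<alpha> \<ge> 1"
    and ia: "integral_approx (VV K n) (EE K) (Nv Src) 3 (LL K n) (\<lambda>_. K) \<alpha>"
  shows "\<alpha>^2 \<ge> real K / 4"
proof -
  from ia obtain T where T: "T \<subseteq> EE K"
    and hs: "real (card (out_edges T (Nv Src))) \<ge> real K / \<alpha>"
    and hin: "\<forall>v\<in>VV K n. card (in_edges T v) \<le> 1"
    and hout: "\<forall>v\<in>VV K n - LL K n 3 - {Nv Src}. card (in_edges T v) = 1 \<longrightarrow> real (card (out_edges T v)) \<ge> real K / \<alpha>"
    unfolding integral_approx_def by auto
  define r where "r = real K / \<alpha>"
  have r0: "r > 0" unfolding r_def using K al by simp
  have finT: "finite T" using T finite_EE finite_subset by blast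
  have in1: "real (card (out_edges T v)) \<ge> r" if v: "v \<in> VV K n - LL K n 3 - {Nv Src}" and e: "e \<in> T" "snd e = v" for v e
  proof -
    have "e \<in> in_edges T v" using e unfolding in_edges_def by auto
    moreover have "finite (in_edges T v)" using finT unfolding in_edges_def by auto
    ultimately have "card (in_edges T v) \<ge> 1"
      by (metis One_nat_def Suc_leI card_gt_0_iff empty_iff)
    moreover have "card (in_edges T v) \<le> 1" using hin v by auto
    ultimately show ?thesis using hout v unfolding r_def by auto
  qed
  have "card (out_edges T (Nv Src)) \<noteq> 0" using hs r0 unfolding r_def by auto
  then obtain e where e: "e \<in> out_edges T (Nv Src)" by (metis card.empty ex_in_conv)
  then have "e \<in> EE K" "fst e = Nv Src" using T unfolding out_edges_def by auto
  then obtain uu jj where ujj: "uu < K" "jj < K^2" and ed: "e = (Nv Src, Nv (Av uu jj))"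
    using EE_from_Src by blast
  define a where "a = Nv (Av uu jj)"
  have ra: "real (card (out_edges T a)) \<ge> r"
    using in1[OF Av_mem[OF ujj], of e] e ed unfolding a_def out_edges_def by auto
  define Bs where "Bs = snd ` out_edges T a"
  have finO: "finite (out_edges T a)" using finT unfolding out_edges_def by auto
  have cBs: "card Bs = card (out_edges T a)"
    unfolding Bs_def by (rule card_image) (auto simp: inj_on_def out_edges_def prod_eq_iff)
  have finBs: "finite Bs" unfolding Bs_def using finO by simp
  have Bs_form: "\<exists>l. l < K^2 \<and> b = Nv (Bv uu jj l) \<and> (a, b) \<in> T" if "b \<in> Bs" for b
  proof -
    from that obtain e' where e': "e' \<in> T" "fst e' = a" "b = snd e'" unfolding Bs_def out_edges_def by auto
    then obtain l where "l < K^2" "e' = (Nv (Av uu jj), Nv (Bv uu jj l))"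
      using EE_from_Av[of e' K uu jj] T unfolding a_def by auto
    then show ?thesis using e' unfolding a_def by auto
  qed
  define CS where "CS = (\<lambda>t. Nv (Cv uu jj t)) ` {..<K}"
  have finCS: "finite CS" and cCS: "card CS \<le> K" unfolding CS_def
    using card_image_le[of "{..<K}" "\<lambda>t. Nv (Cv uu jj t)"] by auto
  define D where "D b = {c \<in> CS. (b, c) \<in> T}" for b
  have finD: "finite (D b)" for b unfolding D_def using finCS by auto
  have rb: "r - 1 \<le> real (card (D b))" if b: "b \<in> Bs" for b
  proof -
    obtain l where l: "l < K^2" "b = Nv (Bv uu jj l)" "(a, b) \<in> T" using Bs_form[OF b] by blast
    have rb0: "real (card (out_edges T b)) \<ge> r"
      using in1[OF Bv_mem[OF ujj l(1)], of "(a, b)"] l by auto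
    have sub: "out_edges T b \<subseteq> insert (b, Nv (Pv uu jj l)) ((\<lambda>c. (b, c)) ` D b)"
    proof
      fix e' assume e': "e' \<in> out_edges T b"
      then have "e' \<in> EE K" "fst e' = Nv (Bv uu jj l)" "e' \<in> T" using T l unfolding out_edges_def by auto
      then show "e' \<in> insert (b, Nv (Pv uu jj l)) ((\<lambda>c. (b, c)) ` D b)"
        using EE_from_Bv[of e' K uu jj l] l unfolding D_def CS_def by auto
    qed
    have "card (out_edges T b) \<le> card (insert (b, Nv (Pv uu jj l)) ((\<lambda>c. (b, c)) ` D b))"
      by (rule card_mono[OF _ sub]) (use finD in auto)
    also have "\<dots> \<le> Suc (card ((\<lambda>c. (b, c)) ` D b))" by (rule card_insert_le_m1) (auto simp: card_insert_le)
    also have "\<dots> \<le> Suc (card (D b))" using card_image_le[OF finD[of b], of "\<lambda>c. (b, c)"] by simp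
    finally show ?thesis using rb0 by linarith
  qed
  have disj: "D b \<inter> D b' = {}" if "b \<in> Bs" "b' \<in> Bs" "b \<noteq> b'" for b b'
  proof (rule ccontr)
    assume "D b \<inter> D b' \<noteq> {}"
    then obtain c where c: "c \<in> CS" "(b, c) \<in> T" "(b', c) \<in> T" unfolding D_def by auto
    have cV: "c \<in> VV K n" using c(1) ujj Cv_mem unfolding CS_def by auto
    have "{(b, c), (b', c)} \<subseteq> in_edges T c" using c unfolding in_edges_def by auto
    moreover have "finite (in_edges T c)" using finT unfolding in_edges_def by auto
    ultimately have "card {(b, c), (b', c)} \<le> card (in_edges T c)" by (rule card_mono[rotated])
    moreover have "card {(b, c), (b', c)} = 2" using that by auto
    ultimately show False using hin cV by fastforce
  qed
  have sumD: "(\<Sum>b\<in>Bs. card (D b)) \<le> K"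
  proof -
    have "(\<Sum>b\<in>Bs. card (D b)) = card (\<Union>b\<in>Bs. D b)"
      by (rule card_UN_disjoint[symmetric]) (use finBs finD disj in auto)
    also have "\<dots> \<le> card CS" by (rule card_mono[OF finCS]) (auto simp: D_def)
    finally show ?thesis using cCS by linarith
  qed
  have key: "r \<ge> 1 \<longrightarrow> r * (r - 1) \<le> real K"
  proof
    assume r1: "r \<ge> 1"
    have rB: "r \<le> real (card Bs)" using ra cBs by simp
    have "r * (r - 1) \<le> real (card Bs) * (r - 1)" by (rule mult_right_mono[OF rB]) (use r1 in simp)
    also have "\<dots> = (\<Sum>b\<in>Bs. r - 1)" by simp
    also have "\<dots> \<le> (\<Sum>b\<in>Bs. real (card (D b)))" by (rule sum_mono) (rule rb)
    also have "\<dots> = real (\<Sum>b\<in>Bs. card (D b))" by simp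
    also have "\<dots> \<le> real K" using sumD by linarith
    finally show "r * (r - 1) \<le> real K" .
  qed
  have r2: "r^2 \<le> 4 * real K" by (rule final_arith[OF r0 _ key]) (use K in simp)
  have "\<alpha> = real K / r" unfolding r_def using al K by simp
  then have "\<alpha>^2 = real K * real K / r^2" by (simp add: power2_eq_square)
  also have "\<dots> \<ge> real K * real K / (4 * real K)"
    using r2 r0 K by (intro divide_left_mono) auto
  finally show ?thesis using K by (simp add: field_simps)
qed




lemma real_facts:
  fixes n :: nat
  assumes n: "n \<ge> 1024"
  defines "x \<equiv> real n powr (1/5)"
  defines "K \<equiv> nat \<lfloor>x / 2\<rfloor>"
  shows "K \<ge> 2" "real K \<ge> x / 4" "32 * K^5 \<le> n" "(real n powr (1/10))^2 = x"
proof -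
  have n0: "real n > 0" using n by simp
  have x5: "x^5 = real n" unfolding x_def using n0 by (simp add: powr_power)
  have x0: "x \<ge> 0" unfolding x_def by simp
  have "4^5 \<le> x^5" using x5 n by simp
  then have x4: "x \<ge> 4" using power_le_imp_le_base[of 4 4 x] x0 by simp
  have fl: "real K \<le> x / 2" "real K > x / 2 - 1" unfolding K_def using x4 by linarith+
  show "K \<ge> 2" unfolding K_def using x4 by linarith
  show "real K \<ge> x / 4" using fl x4 by linarith
  have "(real K)^5 \<le> (x/2)^5" using fl by (intro power_mono) auto
  then have "32 * (real K)^5 \<le> real n" using x5 by (simp add: power_divide)
  then show "32 * K^5 \<le> n" by (metis of_nat_le_iff of_nat_mult of_nat_numeral of_nat_power)
  show "(real n powr (1/10))^2 = x" unfolding x_def using n0 by (simp add: powr_power)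
qed

lemma main_n:
  fixes n :: nat assumes n: "1024 \<le> n"
  shows "\<exists>V E s L k. mmda_instance V E s 3 L k \<and>
       1 * real n \<le> real (card V) \<and> real (card V) \<le> 2 * real n \<and>
       (\<forall>u \<in> V - L 3. real (k u) \<ge> 1/4 * real n powr (1/5)) \<and>
       (\<exists>\<beta> \<ge> 1. SA_assign_feasible 1 V E s 3 L k \<beta> \<and>
          (\<forall>\<alpha> \<ge> 1. integral_approx V E s 3 L k \<alpha> \<longrightarrow> \<alpha> \<ge> 1/4 * real n powr (1/10) * \<beta>))"
proof -
  define x where "x = real n powr (1/5)"
  define K where "K = nat \<lfloor>x / 2\<rfloor>"
  have K2: "K \<ge> 2" and Kx: "real K \<ge> x / 4" and K5: "32 * K^5 \<le> n"
    and yx: "(real n powr (1/10))^2 = x"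
    using real_facts[OF n] unfolding x_def K_def by auto
  have p3: "K * K^2 \<le> K^5" and p4: "K * K^2 * K \<le> K^5" and p1: "1 \<le> K^5"
  proof -
    have "K^3 \<le> K^5" "K^4 \<le> K^5" using K2 by (simp_all add: power_increasing)
    then show "K * K^2 \<le> K^5" "K * K^2 * K \<le> K^5"
      by (simp_all add: power_Suc[symmetric] power_add[symmetric] mult.commute mult.left_commute
          numeral_eq_Suc)
    show "1 \<le> K^5" using K2 by simp
  qed
  have p5: "K * K^2 * K^2 = K^5" by (simp add: power_add[symmetric] mult.commute
        numeral_eq_Suc)
  have core: "1 + K * K^2 + K * K^2 * K^2 + K * K^2 * K^2 + K * K^2 * K \<le> n"
    using p1 p3 p4 p5 K5 by linarith
  show ?thesis
  proof (intro exI[of _ "VV K n"] exI[of _ "EE K"] exI[of _ "Nv Src"] exI[of _ "LL K n"] exI[of _ "\<lambda>_. K"]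
      conjI exI[of _ "1::real"] ballI allI impI)
    show "mmda_instance (VV K n) (EE K) (Nv Src) 3 (LL K n) (\<lambda>_. K)" using mmda_inst K2 by simp
    show "1 * real n \<le> real (card (VV K n))" using card_VV(1)[OF core] by simp
    show "real (card (VV K n)) \<le> 2 * real n" using card_VV(2)[OF core] by simp
    show "real K \<ge> 1/4 * real n powr (1/5)" for u using Kx unfolding x_def by simp
    show "(1::real) \<le> 1" by simp
    show "SA_assign_feasible 1 (VV K n) (EE K) (Nv Src) 3 (LL K n) (\<lambda>_. K) 1"
      unfolding SA_assign_feasible_def using SA_inst[OF K2, of n] by auto
    fix \<alpha> :: real assume al: "\<alpha> \<ge> 1" and ia: "integral_approx (VV K n) (EE K) (Nv Src) 3 (LL K n) (\<lambda>_. K) \<alpha>"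
    have "\<alpha>^2 \<ge> real K / 4" by (rule integral_lb[OF _ al ia]) (use K2 in simp)
    then have "(1/4 * real n powr (1/10))^2 \<le> \<alpha>^2"
      using Kx yx by (simp add: power_mult_distrib power2_eq_square)
    then have "1/4 * real n powr (1/10) \<le> \<alpha>"
      by (rule power2_le_imp_le) (use al in simp)
    then show "\<alpha> \<ge> 1/4 * real n powr (1/10) * 1" by simp
  qed
qed


theorem theorem1:
  shows "\<exists>c1 c2 c3 \<epsilon> c4 \<delta> (N0::nat).
    c1 > 0 \<and> c2 > 0 \<and> c3 > 0 \<and> \<epsilon> > 0 \<and> c4 > 0 \<and> \<delta> > 0 \<and>
    (\<forall>n \<ge> N0. \<exists>V E s L k.
       mmda_instance V E s 3 L k \<and>
       c1 * real n \<le> real (card V) \<and> real (card V) \<le> c2 * real n \<and>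
       (\<forall>u \<in> V - L 3. real (k u) \<ge> c3 * real n powr \<epsilon>) \<and>
       (\<exists>\<beta> \<ge> 1. SA_assign_feasible 1 V E s 3 L k \<beta> \<and>
          (\<forall>\<alpha> \<ge> 1. integral_approx V E s 3 L k \<alpha> \<longrightarrow> \<alpha> \<ge> c4 * real n powr \<delta> * \<beta>)))"
  apply (rule exI[of _ "1::real"], rule exI[of _ "2::real"], rule exI[of _ "1/4::real"], rule exI[of _ "1/5::real"],
     rule exI[of _ "1/4::real"], rule exI[of _ "1/10::real"], rule exI[of _ "1024::nat"])
  apply (intro conjI allI impI)
  using main_n by simp_all


end
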